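(* Let $\tau$ be a $\sigma$-maxitive measure on a $\sigma$-algebra $\mathcal{B}$ of subsets of a nonempty set $E$. Then the following are equivalent: - $\tau$ has the Radon–Nikodym property with respect to the Sugeno integral, i.e. for every $\sigma$-maxitive measure $\nu$ on $\mathcal{B}$ with $\nu\ll_\wedge\tau$ there is a $\mathcal{B}$-measurable $c:E\to[0,\infty]$ with $\nu(B)=\sup_{t\ge0}\min\big(t,\tau(B\cap\{c>t\})\big)$ for all $B\in\mathcal{B}$; - $\tau$ is $\sigma$-principal.
   Context: A $\sigma$-maxitive measure on $\mathcal{B}$ is a map $\nu:\mathcal{B}\to[0,\infty]$ with $\nu(\emptyset)=0$ and $\nu(\bigcup_j B_j)=\sup_j\nu(B_j)$ for every countable family $(B_j)$ in $\mathcal{B}$. A map $f:E\to[0,\infty]$ is $\mathcal{B}$-measurable if $\{f>t\}\in\mathcal{B}$ for all $t\in[0,\infty)$. Here the pseudo-multiplication is $\odot=\min$, whose identity is $\infty$; every element of $[0,\infty]$ is $\odot$-finite in this case. Absolute continuity $\nu\ll_\wedge\tau$ means $\nu(B)\le\min(\infty,\tau(B))=\tau(B)$ for all $B\in\mathcal{B}$. A $\sigma$-ideal of $\mathcal{B}$ is a nonempty subfamily closed under countable unions and under passing to measurable subsets. A set is $\tau$-negligible if it is contained in some $B\in\mathcal{B}$ with $\tau(B)=0$. $\tau$ is $\sigma$-principal if for every $\sigma$-ideal $\mathcal{I}$ of $\mathcal{B}$ there is $L\in\mathcal{I}$ such that $S\setminus L$ is $\tau$-negligible for all $S\in\mathcal{I}$.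 *)

theory Defs
  imports "HOL-Analysis.Analysis"
begin

definition sigma_maxitive :: "'a set set \<Rightarrow> ('a set \<Rightarrow> ennreal) \<Rightarrow> bool" where
  "sigma_maxitive BB \<nu> \<longleftrightarrow>
     \<nu> {} = 0 \<and>
     (\<forall>C. countable C \<and> C \<subseteq> BB \<longrightarrow> \<nu> (\<Union>C) = (SUP B\<in>C. \<nu> B))"

definition B_measurable :: "'a set \<Rightarrow> 'a set set \<Rightarrow> ('a \<Rightarrow> ennreal) \<Rightarrow> bool" where
  "B_measurable E BB c \<longleftrightarrow> (\<forall>t::real. t \<ge> 0 \<longrightarrow> {x\<in>E. ennreal t < c x} \<in> BB)"

text \<open>Absolute continuity with respect to \<odot> = min (identity \<infinity>).\<close>
definition abs_cont_min :: "'a set set \<Rightarrow> ('a set \<Rightarrow> ennreal) \<Rightarrow> ('a set \<Rightarrow> ennreal) \<Rightarrow> bool" where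
  "abs_cont_min BB \<nu> \<tau> \<longleftrightarrow> (\<forall>B\<in>BB. \<nu> B \<le> min \<infinity> (\<tau> B))"

definition has_sugeno_density ::
  "'a set \<Rightarrow> 'a set set \<Rightarrow> ('a set \<Rightarrow> ennreal) \<Rightarrow> ('a set \<Rightarrow> ennreal) \<Rightarrow> ('a \<Rightarrow> ennreal) \<Rightarrow> bool" where
  "has_sugeno_density E BB \<nu> \<tau> c \<longleftrightarrow>
     (\<forall>B\<in>BB. \<nu> B = (SUP t\<in>{t::real. t \<ge> 0}. min (ennreal t) (\<tau> (B \<inter> {x\<in>E. ennreal t < c x}))))"

definition radon_nikodym_sugeno :: "'a set \<Rightarrow> 'a set set \<Rightarrow> ('a set \<Rightarrow> ennreal) \<Rightarrow> bool" where
  "radon_nikodym_sugeno E BB \<tau> \<longleftrightarrow>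
     (\<forall>\<nu>. sigma_maxitive BB \<nu> \<and> abs_cont_min BB \<nu> \<tau> \<longrightarrow>
        (\<exists>c. B_measurable E BB c \<and> has_sugeno_density E BB \<nu> \<tau> c))"

definition sigma_ideal :: "'a set set \<Rightarrow> 'a set set \<Rightarrow> bool" where
  "sigma_ideal BB I \<longleftrightarrow>
     I \<noteq> {} \<and> I \<subseteq> BB \<and>
     (\<forall>C. countable C \<and> C \<subseteq> I \<longrightarrow> \<Union>C \<in> I) \<and>
     (\<forall>S\<in>I. \<forall>A\<in>BB. A \<subseteq> S \<longrightarrow> A \<in> I)"

definition negligible_wrt :: "'a set set \<Rightarrow> ('a set \<Rightarrow> ennreal) \<Rightarrow> 'a set \<Rightarrow> bool" where
  "negligible_wrt BB \<tau> S \<longleftrightarrow> (\<exists>B\<in>BB. S \<subseteq> B \<and> \<tau> B = 0)"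

definition sigma_principal :: "'a set set \<Rightarrow> ('a set \<Rightarrow> ennreal) \<Rightarrow> bool" where
  "sigma_principal BB \<tau> \<longleftrightarrow>
     (\<forall>I. sigma_ideal BB I \<longrightarrow> (\<exists>L\<in>I. \<forall>S\<in>I. negligible_wrt BB \<tau> (S - L)))"

end

theory Submission
  imports Defs
begin

lemma smax_UN:
  assumes "sigma_maxitive BB \<nu>" "countable X" "f ` X \<subseteq> BB"
  shows "\<nu> (\<Union>x\<in>X. f x) = (SUP x\<in>X. \<nu> (f x))"
proof -
  have "\<nu> (\<Union>(f ` X)) = (SUP B\<in>f ` X. \<nu> B)"
    using assms unfolding sigma_maxitive_def by blast
  thus ?thesis by (simp add: image_image)
qed

lemma smax_Un:
  assumes "sigma_maxitive BB \<nu>" "A \<in> BB" "B \<in> BB"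
  shows "\<nu> (A \<union> B) = max (\<nu> A) (\<nu> B)"
proof -
  have "\<nu> (\<Union>{A,B}) = (SUP C\<in>{A,B}. \<nu> C)"
    using assms unfolding sigma_maxitive_def by (meson countable_finite finite.emptyI finite_insert insert_subsetI empty_subsetI)
  thus ?thesis by (simp add: sup_max)
qed

lemma smax_mono:
  assumes "sigma_maxitive BB \<nu>" "A \<in> BB" "B \<in> BB" "A \<subseteq> B"
  shows "\<nu> A \<le> \<nu> B"
  using smax_Un[OF assms(1-3)] assms(4) by (metis Un_absorb1 max.cobounded1)

lemma rat_approx_le:
  fixes z :: ennreal
  assumes "0 \<le> t" "\<And>s. s \<in> \<rat> \<Longrightarrow> t < s \<Longrightarrow> z \<le> ennreal s"
  shows "z \<le> ennreal t"
proof (rule ccontr)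
  assume "\<not> z \<le> ennreal t" hence "ennreal t < z" by simp
  then obtain w where w: "ennreal t < w" "w < z" using dense by blast
  then have "w \<noteq> top" using top_greatest[of z] by auto
  then obtain r where r: "w = ennreal r" "0 \<le> r" by (cases w) auto
  have "t < r" using w(1) r assms(1) by (simp add: ennreal_less_iff)
  then obtain s where s: "s \<in> \<rat>" "t < s" "s < r" using Rats_dense_in_real by blast
  then have zs: "z \<le> ennreal s" using assms by blast
  have sr: "ennreal s < ennreal r" using s assms(1) by (simp add: ennreal_less_iff)
  have "z < w" using zs sr r(1) by (metis le_less_trans)
  thus False using w(2) by (metis less_asym)
qed

lemma pos_of_less: "(a::ennreal) < b \<Longrightarrow> 0 < b"
  by (rule le_less_trans[OF zero_le])

lemma rn_imp_principal:
  assumes sa: "sigma_algebra E BB" and tm: "sigma_maxitive BB \<tau>"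
    and rn: "radon_nikodym_sugeno E BB \<tau>"
  shows "sigma_principal BB \<tau>"
  unfolding sigma_principal_def
proof (intro allI impI)
  interpret sa: sigma_algebra E BB by (rule sa)
  fix I assume I: "sigma_ideal BB I"
  have Ine: "I \<noteq> {}" and IB: "I \<subseteq> BB"
    using I unfolding sigma_ideal_def by auto
  have Iun: "\<And>C. countable C \<Longrightarrow> C \<subseteq> I \<Longrightarrow> \<Union>C \<in> I"
    using I unfolding sigma_ideal_def by blast
  have Isub: "\<And>S A. S \<in> I \<Longrightarrow> A \<in> BB \<Longrightarrow> A \<subseteq> S \<Longrightarrow> A \<in> I"
    using I unfolding sigma_ideal_def by blast
  have emp: "{} \<in> I" using Ine Isub by blast
  have Iimg: "(\<Union>x\<in>X. f x) \<in> I" if "countable X" "f ` X \<subseteq> I" for X and f :: "'b \<Rightarrow> 'a set"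
    using Iun[of "f ` X"] that by auto
  have tau0: "\<tau> {} = 0" using tm unfolding sigma_maxitive_def by blast
  define \<nu> where "\<nu> B = (INF S\<in>I. \<tau> (B - S))" for B
  have attain: "\<exists>S\<in>I. \<nu> B = \<tau> (B - S)" if B: "B \<in> BB" for B
  proof -
    obtain f :: "nat \<Rightarrow> ennreal" where f: "range f \<subseteq> (\<lambda>S. \<tau>(B-S)) ` I"
      "Inf ((\<lambda>S. \<tau>(B-S)) ` I) = (INF i. f i)"
      using ennreal_Inf_countable_INF[of "(\<lambda>S. \<tau>(B-S)) ` I"] Ine by blast
    have "\<forall>n. \<exists>S\<in>I. f n = \<tau>(B - S)" using f(1) by blast
    then obtain g where g: "\<And>n. g n \<in> I" "\<And>n. f n = \<tau>(B - g n)" by metis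
    define S where "S = (\<Union>n. g n)"
    have SI: "S \<in> I" unfolding S_def using g(1) by (intro Iimg) auto
    have SB: "S \<in> BB" using SI IB by blast
    have "\<tau>(B - S) \<le> f n" for n
      unfolding g(2) using g(1) IB B SB by (intro smax_mono[OF tm]) (auto simp: S_def)
    hence "\<tau>(B - S) \<le> (INF i. f i)" by (simp add: le_INF_iff)
    moreover have "\<nu> B \<le> \<tau>(B - S)" unfolding \<nu>_def by (rule INF_lower[OF SI])
    moreover have "\<nu> B = (INF i. f i)" using f(2) by (simp add: \<nu>_def)
    ultimately show ?thesis using SI by (intro bexI[of _ S]) auto
  qed
  have numono: "\<nu> A \<le> \<nu> B" if "A \<in> BB" "B \<in> BB" "A \<subseteq> B" for A B
    unfolding \<nu>_def
  proof (rule INF_mono)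
    fix S assume "S \<in> I"
    hence "S \<in> BB" using IB by blast
    hence "\<tau> (A - S) \<le> \<tau> (B - S)" using that by (intro smax_mono[OF tm]) auto
    thus "\<exists>S'\<in>I. \<tau> (A - S') \<le> \<tau> (B - S)" using \<open>S \<in> I\<close> by blast
  qed
  have nusm: "sigma_maxitive BB \<nu>"
    unfolding sigma_maxitive_def
  proof (intro conjI allI impI)
    show "\<nu> {} = 0" unfolding \<nu>_def using Ine by (simp add: tau0)
    fix C assume C: "countable C \<and> C \<subseteq> BB"
    have UC: "\<Union>C \<in> BB" using C by blast
    have "\<forall>B\<in>C. \<exists>S\<in>I. \<nu> B = \<tau> (B - S)" using attain C by blast
    then obtain h where h: "\<And>B. B \<in> C \<Longrightarrow> h B \<in> I" "\<And>B. B \<in> C \<Longrightarrow> \<nu> B = \<tau> (B - h B)"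
      by metis
    define S where "S = (\<Union>B\<in>C. h B)"
    have SI: "S \<in> I" unfolding S_def using h(1) C by (intro Iimg) auto
    have SB: "S \<in> BB" using SI IB by blast
    have "\<nu> (\<Union>C) \<le> \<tau> (\<Union>C - S)" unfolding \<nu>_def by (rule INF_lower[OF SI])
    also have "\<Union>C - S = (\<Union>B\<in>C. B - S)" by blast
    also have "\<tau> (\<Union>B\<in>C. B - S) = (SUP B\<in>C. \<tau> (B - S))"
      using C SB by (intro smax_UN[OF tm]) auto
    also have "\<dots> \<le> (SUP B\<in>C. \<nu> B)"
    proof (rule SUP_mono)
      fix B assume B: "B \<in> C"
      have "h B \<in> BB" using h(1)[OF B] IB by blast
      hence "\<tau> (B - S) \<le> \<tau> (B - h B)" using B C SB
        by (intro smax_mono[OF tm]) (auto simp: S_def)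
      thus "\<exists>B'\<in>C. \<tau> (B - S) \<le> \<nu> B'" using h(2)[OF B] B by (intro bexI[of _ B]) auto
    qed
    finally have "\<nu> (\<Union>C) \<le> (SUP B\<in>C. \<nu> B)" .
    moreover have "(SUP B\<in>C. \<nu> B) \<le> \<nu> (\<Union>C)"
      using C UC by (intro SUP_least numono) auto
    ultimately show "\<nu> (\<Union>C) = (SUP B\<in>C. \<nu> B)" by (rule antisym)
  qed
  have nuac: "abs_cont_min BB \<nu> \<tau>"
    unfolding abs_cont_min_def
  proof
    fix B assume "B \<in> BB"
    have "\<nu> B \<le> \<tau> (B - {})" unfolding \<nu>_def by (rule INF_lower[OF emp])
    thus "\<nu> B \<le> min \<infinity> (\<tau> B)" by simp
  qed
  obtain c where cm: "B_measurable E BB c" and cd: "has_sugeno_density E BB \<nu> \<tau> c"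
    using rn nusm nuac unfolding radon_nikodym_sugeno_def by blast
  have cset: "{x\<in>E. ennreal t < c x} \<in> BB" if "0 \<le> t" for t
    using cm that unfolding B_measurable_def by blast
  define P where "P = {x\<in>E. 0 < c x}"
  have PB: "P \<in> BB" using cset[of 0] by (simp add: P_def)
  define Z where "Z = E - P"
  have ZB: "Z \<in> BB" using PB by (simp add: Z_def sa.compl_sets)
  have nuZ: "\<nu> Z = 0"
  proof -
    have "\<nu> Z = (SUP t\<in>{t::real. t \<ge> 0}. min (ennreal t) (\<tau> (Z \<inter> {x\<in>E. ennreal t < c x})))"
      using cd ZB unfolding has_sugeno_density_def by blast
    also have "\<dots> = 0"
    proof (rule antisym)
      show "(SUP t\<in>{t::real. t \<ge> 0}. min (ennreal t) (\<tau> (Z \<inter> {x\<in>E. ennreal t < c x}))) \<le> 0"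
      proof (rule SUP_least)
        fix t :: real assume "t \<in> {t. t \<ge> 0}"
        have "Z \<inter> {x\<in>E. ennreal t < c x} = {}" using pos_of_less
          by (auto simp: Z_def P_def)
        thus "min (ennreal t) (\<tau> (Z \<inter> {x\<in>E. ennreal t < c x})) \<le> 0" by (simp add: tau0)
      qed
    qed simp
    finally show ?thesis .
  qed
  obtain L where LI: "L \<in> I" and L0: "\<tau> (Z - L) = 0" using attain[OF ZB] nuZ by metis
  have LB: "L \<in> BB" using LI IB by blast
  show "\<exists>L\<in>I. \<forall>S\<in>I. negligible_wrt BB \<tau> (S - L)"
  proof (intro bexI[OF _ LI] ballI)
    fix S assume SI: "S \<in> I"
    have SB: "S \<in> BB" using SI IB by blast
    have SE: "S \<subseteq> E" using sa.sets_into_space[OF SB] .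
    have nuS: "\<nu> S = 0"
    proof -
      have "\<nu> S \<le> \<tau> (S - S)" unfolding \<nu>_def by (rule INF_lower[OF SI])
      thus ?thesis by (simp add: tau0)
    qed
    have small: "\<tau> (S \<inter> {x\<in>E. ennreal t < c x}) = 0" if t: "0 < t" for t :: real
    proof -
      have "min (ennreal t) (\<tau> (S \<inter> {x\<in>E. ennreal t < c x})) \<le>
        (SUP t\<in>{t::real. t \<ge> 0}. min (ennreal t) (\<tau> (S \<inter> {x\<in>E. ennreal t < c x})))"
        using t by (intro SUP_upper) auto
      also have "\<dots> = \<nu> S" using cd SB unfolding has_sugeno_density_def by simp
      also have "\<dots> = 0" by (rule nuS)
      finally have "min (ennreal t) (\<tau> (S \<inter> {x\<in>E. ennreal t < c x})) = 0" by simp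
      moreover have "ennreal t \<noteq> 0" using t by simp
      ultimately show ?thesis by (metis min_def)
    qed
    have SP: "S \<inter> P = (\<Union>n. S \<inter> {x\<in>E. ennreal (inverse (real (Suc n))) < c x})"
    proof (rule set_eqI, rule iffI)
      fix x assume x: "x \<in> S \<inter> P"
      hence "0 < c x" by (simp add: P_def)
      then obtain w where w: "0 < w" "w < c x" using dense by blast
      then have "w \<noteq> top" using top_greatest[of "c x"] by auto
      then obtain r where r: "w = ennreal r" "0 \<le> r" by (cases w) auto
      have "0 < r" using w r by simp
      then obtain n where n: "inverse (real (Suc n)) < r" using reals_Archimedean by blast
      have "ennreal (inverse (real (Suc n))) < w" using n r by (simp add: ennreal_less_iff)
      hence "ennreal (inverse (real (Suc n))) < c x" using w(2) by (rule less_trans)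
      thus "x \<in> (\<Union>n. S \<inter> {x\<in>E. ennreal (inverse (real (Suc n))) < c x})"
        using x by (auto simp: P_def)
    next
      fix x assume "x \<in> (\<Union>n. S \<inter> {x\<in>E. ennreal (inverse (real (Suc n))) < c x})"
      thus "x \<in> S \<inter> P" using pos_of_less by (auto simp: P_def)
    qed
    have "\<tau> (S \<inter> P) = (SUP n. \<tau> (S \<inter> {x\<in>E. ennreal (inverse (real (Suc n))) < c x}))"
      unfolding SP using SB cset by (intro smax_UN[OF tm]) auto
    also have "\<dots> = 0" using small by simp
    finally have SP0: "\<tau> (S \<inter> P) = 0" .
    have NB: "(S \<inter> P) \<union> (Z - L) \<in> BB" using SB PB ZB LB by blast
    have "\<tau> ((S \<inter> P) \<union> (Z - L)) = 0"
      using SB PB ZB LB SP0 L0 by (subst smax_Un[OF tm]) auto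
    moreover have "S - L \<subseteq> (S \<inter> P) \<union> (Z - L)" using SE by (auto simp: Z_def)
    ultimately show "negligible_wrt BB \<tau> (S - L)" using NB unfolding negligible_wrt_def by blast
  qed
qed

lemma principal_imp_rn:
  assumes sa: "sigma_algebra E BB" and tm: "sigma_maxitive BB \<tau>"
    and sp: "sigma_principal BB \<tau>"
  shows "radon_nikodym_sugeno E BB \<tau>"
  unfolding radon_nikodym_sugeno_def
proof (intro allI impI)
  interpret sa: sigma_algebra E BB by (rule sa)
  fix \<nu> assume H: "sigma_maxitive BB \<nu> \<and> abs_cont_min BB \<nu> \<tau>"
  hence nm: "sigma_maxitive BB \<nu>" by blast
  have ac: "\<nu> B \<le> \<tau> B" if "B \<in> BB" for B
    using H that unfolding abs_cont_min_def by auto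
  have nu0: "\<nu> {} = 0" using nm unfolding sigma_maxitive_def by blast
  have tau0: "\<tau> {} = 0" using tm unfolding sigma_maxitive_def by blast
  define Iq where "Iq q = {S\<in>BB. \<nu> S \<le> ennreal q}" for q
  have Iq_ideal: "sigma_ideal BB (Iq q)" for q
    unfolding sigma_ideal_def
  proof (intro conjI allI impI ballI)
    show "Iq q \<noteq> {}" using nu0 by (auto simp: Iq_def)
    show "Iq q \<subseteq> BB" by (auto simp: Iq_def)
  next
    fix C assume C: "countable C \<and> C \<subseteq> Iq q"
    hence CB: "C \<subseteq> BB" by (auto simp: Iq_def)
    have "\<nu> (\<Union>C) = (SUP B\<in>C. \<nu> B)" using nm C CB unfolding sigma_maxitive_def by blast
    also have "\<dots> \<le> ennreal q" using C by (intro SUP_least) (auto simp: Iq_def)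
    finally show "\<Union>C \<in> Iq q" using C CB by (auto simp: Iq_def)
  next
    fix S A assume "S \<in> Iq q" "A \<in> BB" "A \<subseteq> S"
    thus "A \<in> Iq q" using smax_mono[OF nm, of A S] by (auto simp: Iq_def)
  qed
  have "\<exists>L\<in>Iq q. \<forall>S\<in>Iq q. negligible_wrt BB \<tau> (S - L)" for q
    using sp Iq_ideal unfolding sigma_principal_def by blast
  then obtain L where L: "\<And>q. L q \<in> Iq q"
    "\<And>q S. S \<in> Iq q \<Longrightarrow> negligible_wrt BB \<tau> (S - L q)" by metis
  have LB: "L q \<in> BB" for q using L(1) by (auto simp: Iq_def)
  define M where "M q = (\<Union>r\<in>{r\<in>\<rat>. 0 \<le> r \<and> r \<le> q}. L r)" for q
  have cntq: "countable {r\<in>\<rat>. 0 \<le> r \<and> r \<le> q}" for q :: real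
    by (rule countable_subset[OF _ countable_rat]) auto
  have MB: "M q \<in> BB" for q
    unfolding M_def using cntq LB by (intro sa.countable_UN') auto
  have Mnu: "\<nu> (M q) \<le> ennreal q" for q
  proof -
    have "\<nu> (M q) = (SUP r\<in>{r\<in>\<rat>. 0 \<le> r \<and> r \<le> q}. \<nu> (L r))"
      unfolding M_def using cntq LB by (intro smax_UN[OF nm]) auto
    also have "\<dots> \<le> ennreal q"
    proof (rule SUP_least)
      fix r assume r: "r \<in> {r\<in>\<rat>. 0 \<le> r \<and> r \<le> q}"
      have "\<nu> (L r) \<le> ennreal r" using L(1)[of r] by (simp add: Iq_def)
      also have "\<dots> \<le> ennreal q" using r by (intro ennreal_leI) auto
      finally show "\<nu> (L r) \<le> ennreal q" .
    qed
    finally show ?thesis .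
  qed
  have Mmono: "M q \<subseteq> M s" if "q \<le> s" for q s using that by (auto simp: M_def)
  have LM: "L q \<subseteq> M q" if "q \<in> \<rat>" "0 \<le> q" for q using that by (auto simp: M_def)
  have Mneg: "\<exists>N\<in>BB. S - M q \<subseteq> N \<and> \<tau> N = 0"
    if "q \<in> \<rat>" "0 \<le> q" "S \<in> BB" "\<nu> S \<le> ennreal q" for q S
  proof -
    have "negligible_wrt BB \<tau> (S - L q)" using that by (intro L(2)) (auto simp: Iq_def)
    then obtain N where "N \<in> BB" "S - L q \<subseteq> N" "\<tau> N = 0" unfolding negligible_wrt_def by blast
    thus ?thesis using LM[OF that(1,2)] by blast
  qed
  define c where "c x = Inf {ennreal q | q. q \<in> \<rat> \<and> 0 \<le> q \<and> x \<in> M q}" for x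
  have c_le: "c x \<le> ennreal q" if "q \<in> \<rat>" "0 \<le> q" "x \<in> M q" for x q
    unfolding c_def using that by (intro Inf_lower) blast
  have c_mem: "x \<in> M s" if cs: "c x < ennreal s" for x s
  proof -
    obtain y where y: "y \<in> {ennreal q | q. q \<in> \<rat> \<and> 0 \<le> q \<and> x \<in> M q}" "y < ennreal s"
    proof -
      have "Inf {ennreal q | q. q \<in> \<rat> \<and> 0 \<le> q \<and> x \<in> M q} < ennreal s"
        using cs by (simp add: c_def)
      thus ?thesis using that Inf_less_iff by (metis (no_types, lifting))
    qed
    then obtain q where q: "y = ennreal q" "q \<in> \<rat>" "0 \<le> q" "x \<in> M q" by blast
    have "q < s" using y(2) q by (simp add: ennreal_less_iff)
    thus ?thesis using q Mmono[of q s] by auto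
  qed
  have c_char: "c x \<le> ennreal t \<longleftrightarrow> (\<forall>s\<in>\<rat>. t < s \<longrightarrow> x \<in> M s)" if t: "0 \<le> t" for x t
  proof
    assume "c x \<le> ennreal t"
    thus "\<forall>s\<in>\<rat>. t < s \<longrightarrow> x \<in> M s"
      using t by (auto intro!: c_mem simp: le_less_trans ennreal_less_iff)
  next
    assume A: "\<forall>s\<in>\<rat>. t < s \<longrightarrow> x \<in> M s"
    show "c x \<le> ennreal t"
      using t by (rule rat_approx_le) (use A t in \<open>auto intro!: c_le\<close>)
  qed
  have cmeas: "B_measurable E BB c"
    unfolding B_measurable_def
  proof (intro allI impI)
    fix t :: real assume t: "0 \<le> t"
    have "{x\<in>E. ennreal t < c x} = (\<Union>s\<in>{s\<in>\<rat>. t < s}. E - M s)"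
      using c_char[OF t] by (auto simp: not_le[symmetric])
    also have "\<dots> \<in> BB"
      using MB by (intro sa.countable_UN' countable_subset[OF _ countable_rat]) auto
    finally show "{x\<in>E. ennreal t < c x} \<in> BB" .
  qed
  have cdens: "has_sugeno_density E BB \<nu> \<tau> c"
    unfolding has_sugeno_density_def
  proof
    fix B assume B: "B \<in> BB"
    have BE: "B \<subseteq> E" using sa.sets_into_space[OF B] .
    define D where "D t = B \<inter> {x\<in>E. ennreal t < c x}" for t
    have DB: "D t \<in> BB" if "0 \<le> t" for t
      using cmeas B that unfolding D_def B_measurable_def by blast
    show "\<nu> B = (SUP t\<in>{t::real. t \<ge> 0}. min (ennreal t) (\<tau> (B \<inter> {x\<in>E. ennreal t < c x})))"
      unfolding D_def[symmetric]
    proof (rule antisym)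
      show "(SUP t\<in>{t::real. t \<ge> 0}. min (ennreal t) (\<tau> (D t))) \<le> \<nu> B"
      proof (rule SUP_least)
        fix t :: real assume t: "t \<in> {t. t \<ge> 0}"
        show "min (ennreal t) (\<tau> (D t)) \<le> \<nu> B"
        proof (cases "ennreal t \<le> \<nu> B")
          case True thus ?thesis by (rule min.coboundedI1)
        next
          case False
          hence lt: "\<nu> B < ennreal t" by simp
          hence "\<nu> B \<noteq> top" by (metis top.not_eq_extremum ennreal_less_top less_trans)
          then obtain r where r: "\<nu> B = ennreal r" "0 \<le> r" by (cases "\<nu> B") auto
          have "r < t" using lt r by (simp add: ennreal_less_iff)
          then obtain q where q: "q \<in> \<rat>" "r < q" "q < t" using Rats_dense_in_real by blast
          have "\<nu> B \<le> ennreal q" using r q by (simp add: ennreal_leI)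
          then obtain N where N: "N \<in> BB" "B - M q \<subseteq> N" "\<tau> N = 0"
            using Mneg[of q B] q r B by auto
          have "D t \<subseteq> B - M q"
          proof
            fix x assume x: "x \<in> D t"
            show "x \<in> B - M q"
            proof (rule ccontr)
              assume "x \<notin> B - M q"
              hence "x \<in> M q" using x by (auto simp: D_def)
              hence "c x \<le> ennreal q" using q r by (intro c_le) auto
              also have "\<dots> \<le> ennreal t" using q by (intro ennreal_leI) auto
              finally show False using x by (auto simp: D_def)
            qed
          qed
          hence "\<tau> (D t) \<le> \<tau> N" using N DB t by (intro smax_mono[OF tm]) auto
          hence "\<tau> (D t) = 0" using N by simp
          thus ?thesis by simp
        qed
      qed
    next
      show "\<nu> B \<le> (SUP t\<in>{t::real. t \<ge> 0}. min (ennreal t) (\<tau> (D t)))"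
      proof (rule dense_le)
        fix y assume y: "y < \<nu> B"
        hence "y \<noteq> top" by (metis top.not_eq_extremum top_greatest not_le)
        then obtain t where yt: "y = ennreal t" "0 \<le> t" by (cases y) auto
        define K where "K = B - D t"
        have KB: "K \<in> BB" using B DB yt by (auto simp: K_def)
        have "\<nu> K \<le> ennreal t"
        proof (rule rat_approx_le[OF yt(2)])
          fix s assume s: "s \<in> \<rat>" "t < s"
          have "K \<subseteq> M s"
          proof
            fix x assume x: "x \<in> K"
            hence "c x \<le> ennreal t" using BE by (auto simp: K_def D_def not_less)
            thus "x \<in> M s" using c_char[OF yt(2)] s by blast
          qed
          hence "\<nu> K \<le> \<nu> (M s)" using KB MB by (intro smax_mono[OF nm])
          also have "\<dots> \<le> ennreal s" by (rule Mnu)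
          finally show "\<nu> K \<le> ennreal s" .
        qed
        have "B = K \<union> D t" using BE by (auto simp: K_def D_def)
        hence "\<nu> B = max (\<nu> K) (\<nu> (D t))" using smax_Un[OF nm KB DB[OF yt(2)]] by simp
        hence "ennreal t < \<nu> (D t)" using y yt \<open>\<nu> K \<le> ennreal t\<close>
          by (metis max_def not_le order.trans)
        also have "\<nu> (D t) \<le> \<tau> (D t)" using DB[OF yt(2)] by (rule ac)
        finally have "min (ennreal t) (\<tau> (D t)) = ennreal t" by simp
        hence "y = min (ennreal t) (\<tau> (D t))" using yt by simp
        also have "\<dots> \<le> (SUP t\<in>{t::real. t \<ge> 0}. min (ennreal t) (\<tau> (D t)))"
          using yt by (intro SUP_upper) auto
        finally show "y \<le> (SUP t\<in>{t::real. t \<ge> 0}. min (ennreal t) (\<tau> (D t)))" .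
      qed
    qed
  qed
  show "\<exists>c. B_measurable E BB c \<and> has_sugeno_density E BB \<nu> \<tau> c"
    using cmeas cdens by blast
qed

theorem mainTheorem3:
  fixes E :: "'a set" and BB :: "'a set set" and \<tau> :: "'a set \<Rightarrow> ennreal"
  assumes "E \<noteq> {}"
    and "sigma_algebra E BB"
    and "sigma_maxitive BB \<tau>"
  shows "radon_nikodym_sugeno E BB \<tau> \<longleftrightarrow> sigma_principal BB \<tau>"
  using rn_imp_principal[OF assms(2,3)] principal_imp_rn[OF assms(2,3)] by blast

end
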